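(* Let $G=(V,E)$ be a network with $n$ sources $s_1,\dots,s_n$ and two terminals $t_1,t_2$, such that for every $i\in\{1,\dots,n\}$ and $j\in\{1,2\}$ the max-flow from $s_i$ to $t_j$ is at least $1$. Then there exists a linear network code over $\mathbb{F}=GF(2^m)$ such that each terminal $t_j$ can recover $\sum_{i=1}^n X_i$ from the symbols on its incoming edges.
   Context: A network is a finite directed acyclic graph $G=(V,E)$ (parallel edges allowed) in which every edge has unit capacity and carries one symbol of a finite field $\mathbb{F}$ per use. Sources are vertices with no incoming edges; source $s_i$ holds $X_i\in\mathbb{F}$, the $X_i$ independent and uniformly distributed (unit entropy). Terminals are vertices with no outgoing edges. In a linear network code the symbol on an edge leaving a non-source vertex is an $\mathbb{F}$-linear combination of the symbols on the edges entering its tail, and the symbol on an edge leaving a source is a multiple of the source symbol. *)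

theory Defs
  imports Complex_Main "HOL-Library.Cardinality" "HOL-Library.FuncSet"
begin

text \<open>A network: finite vertex set V, finite edge set E (edges are abstract
  identifiers, so parallel edges are allowed), tail/head maps, acyclic.
  Every edge has unit capacity.\<close>

definition network :: "'v set \<Rightarrow> 'e set \<Rightarrow> ('e \<Rightarrow> 'v) \<Rightarrow> ('e \<Rightarrow> 'v) \<Rightarrow> bool" where
  "network V E tail head \<longleftrightarrow> finite V \<and> finite E \<and>
     (\<forall>e\<in>E. tail e \<in> V \<and> head e \<in> V) \<and>
     acyclic {(tail e, head e) | e. e \<in> E}"

definition in_edges :: "'e set \<Rightarrow> ('e \<Rightarrow> 'v) \<Rightarrow> 'v \<Rightarrow> 'e set" where
  "in_edges E head v = {e \<in> E. head e = v}"

definition out_edges :: "'e set \<Rightarrow> ('e \<Rightarrow> 'v) \<Rightarrow> 'v \<Rightarrow> 'e set" where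
  "out_edges E tail v = {e \<in> E. tail e = v}"

definition is_flow :: "'v set \<Rightarrow> 'e set \<Rightarrow> ('e \<Rightarrow> 'v) \<Rightarrow> ('e \<Rightarrow> 'v) \<Rightarrow> 'v \<Rightarrow> 'v
                        \<Rightarrow> ('e \<Rightarrow> real) \<Rightarrow> bool" where
  "is_flow V E tail head s t f \<longleftrightarrow>
     (\<forall>e\<in>E. 0 \<le> f e \<and> f e \<le> 1) \<and>
     (\<forall>v\<in>V - {s, t}. (\<Sum>e\<in>in_edges E head v. f e) = (\<Sum>e\<in>out_edges E tail v. f e))"

definition flow_value :: "'e set \<Rightarrow> ('e \<Rightarrow> 'v) \<Rightarrow> ('e \<Rightarrow> 'v) \<Rightarrow> 'v \<Rightarrow> ('e \<Rightarrow> real) \<Rightarrow> real" where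
  "flow_value E tail head s f = (\<Sum>e\<in>out_edges E tail s. f e) - (\<Sum>e\<in>in_edges E head s. f e)"

definition max_flow :: "'v set \<Rightarrow> 'e set \<Rightarrow> ('e \<Rightarrow> 'v) \<Rightarrow> ('e \<Rightarrow> 'v) \<Rightarrow> 'v \<Rightarrow> 'v \<Rightarrow> real" where
  "max_flow V E tail head s t = Sup {flow_value E tail head s f | f. is_flow V E tail head s t f}"

text \<open>Y is the assignment of symbols to edges produced by the linear network code
  with source coefficients a and local coefficients \<beta>, when source s i holds X i
  (i = 1..n): an edge leaving a source carries a multiple of that source's symbol, an
  edge leaving a non-source vertex carries a linear combination of the symbols on the
  edges entering its tail.\<close>
definition linear_code_symbols ::
  "'e set \<Rightarrow> ('e \<Rightarrow> 'v) \<Rightarrow> ('e \<Rightarrow> 'v) \<Rightarrow> nat \<Rightarrow> (nat \<Rightarrow> 'v)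
   \<Rightarrow> ('e \<Rightarrow> 'f::field) \<Rightarrow> ('e \<Rightarrow> 'e \<Rightarrow> 'f) \<Rightarrow> (nat \<Rightarrow> 'f) \<Rightarrow> ('e \<Rightarrow> 'f) \<Rightarrow> bool" where
  "linear_code_symbols E tail head n s a \<beta> X Y \<longleftrightarrow>
     (\<forall>e\<in>E. (\<forall>i\<in>{1..n}. tail e = s i \<longrightarrow> Y e = a e * X i) \<and>
            (tail e \<notin> s ` {1..n} \<longrightarrow> Y e = (\<Sum>e'\<in>in_edges E head (tail e). \<beta> e' e * Y e')))"

end

theory Submission
  imports Defs
begin

primrec epath :: "'e set \<Rightarrow> ('e\<Rightarrow>'v) \<Rightarrow> ('e\<Rightarrow>'v) \<Rightarrow> 'v \<Rightarrow> 'e list \<Rightarrow> 'v \<Rightarrow> bool" where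
  "epath H ta he u [] v \<longleftrightarrow> u = v"
| "epath H ta he u (e#p) v \<longleftrightarrow> e \<in> H \<and> ta e = u \<and> epath H ta he (he e) p v"

lemma epath_append: "epath H ta he u (p@q) w \<longleftrightarrow> (\<exists>v. epath H ta he u p v \<and> epath H ta he v q w)"
  by (induction p arbitrary: u) auto

lemma epath_mono: "epath H ta he u p v \<Longrightarrow> H \<subseteq> H' \<Longrightarrow> epath H' ta he u p v"
  by (induction p arbitrary: u) auto

lemma epath_remove: "epath H ta he u p v \<Longrightarrow> e \<notin> set p \<Longrightarrow> epath (H - {e}) ta he u p v"
  by (induction p arbitrary: u) auto

lemma epath_rtrancl: "epath H ta he u p v \<Longrightarrow> H \<subseteq> E \<Longrightarrow> (u,v) \<in> {(ta e, he e) | e. e \<in> E}\<^sup>*"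
proof (induction p arbitrary: u)
  case Nil then show ?case by simp
next
  case (Cons e p)
  have eE: "e \<in> E" and u: "ta e = u" and pp: "epath H ta he (he e) p v" using Cons.prems by auto
  have 1: "(ta e, he e) \<in> {(ta e, he e) | e. e \<in> E}" using eE by blast
  have 2: "(he e, v) \<in> {(ta e, he e) | e. e \<in> E}\<^sup>*" using Cons.IH[OF pp Cons.prems(2)] .
  show ?case using converse_rtrancl_into_rtrancl[OF 1 2] u by simp
qed

lemma epath_mid: "epath H ta he u p v \<Longrightarrow> H \<subseteq> E \<Longrightarrow> e \<in> set p \<Longrightarrow>
   (u, ta e) \<in> {(ta e, he e) | e. e \<in> E}\<^sup>* \<and> (he e, v) \<in> {(ta e, he e) | e. e \<in> E}\<^sup>*"
proof -
  assume p: "epath H ta he u p v" and HE: "H \<subseteq> E" and e: "e \<in> set p"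
  obtain a b where ab: "p = a @ e # b" using e by (meson split_list)
  then obtain w where w1: "epath H ta he u a w" and w2: "epath H ta he w (e#b) v" using p by (auto simp: epath_append)
  from w2 have "ta e = w" "epath H ta he (he e) b v" by auto
  then show ?thesis using epath_rtrancl[OF w1 HE] epath_rtrancl[of H ta he "he e" b v E] HE by simp
qed

lemma no_cycle: "acyclic {(ta e, he e) | e. e \<in> E} \<Longrightarrow> e \<in> E \<Longrightarrow> (he e, ta e) \<in> {(ta e, he e) | e. e \<in> E}\<^sup>* \<Longrightarrow> False"
proof -
  assume a: "acyclic {(ta e, he e) | e. e \<in> E}" and e: "e \<in> E" and r: "(he e, ta e) \<in> {(ta e, he e) | e. e \<in> E}\<^sup>*"
  have "(ta e, he e) \<in> {(ta e, he e) | e. e \<in> E}" using e by auto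
  then have "(ta e, ta e) \<in> {(ta e, he e) | e. e \<in> E}\<^sup>+" using r by (meson rtrancl_into_trancl2)
  then show False using a by (simp add: acyclic_def)
qed

locale mh =
  fixes E :: "'e set" and ta he :: "'e \<Rightarrow> 'v" and n :: nat and s :: "nat \<Rightarrow> 'v"
    and t1 t2 :: 'v and H :: "'e set"
  assumes acyc: "acyclic {(ta e, he e) | e. e \<in> E}"
    and finE: "finite E"
    and HE: "H \<subseteq> E"
    and out1: "\<forall>e\<in>E. ta e \<noteq> t1" and out2: "\<forall>e\<in>E. ta e \<noteq> t2"
    and goodH: "\<forall>i\<in>{1..n}. \<forall>t\<in>{t1,t2}. \<exists>p. epath H ta he (s i) p t"
    and minH: "\<forall>e\<in>H. \<not> (\<forall>i\<in>{1..n}. \<forall>t\<in>{t1,t2}. \<exists>p. epath (H-{e}) ta he (s i) p t)"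
begin

lemma crit: "e \<in> H \<Longrightarrow> \<exists>i\<in>{1..n}. \<exists>t\<in>{t1,t2}. \<exists>r1 r2. epath H ta he (s i) r1 (ta e) \<and>
    epath H ta he (he e) r2 t \<and> (\<forall>p. \<not> epath (H-{e}) ta he (s i) p t)"
proof -
  assume e: "e\<in>H"
  from minH e obtain i t where i: "i\<in>{1..n}" and t: "t\<in>{t1,t2}"
    and nop: "\<forall>p. \<not> epath (H-{e}) ta he (s i) p t" by blast
  from goodH i t obtain p where p: "epath H ta he (s i) p t" by blast
  have "e \<in> set p" using p nop epath_remove by metis
  then obtain a b where "p = a @ e # b" by (meson split_list)
  with p obtain w where "epath H ta he (s i) a w" "epath H ta he w (e#b) t" by (auto simp: epath_append)
  then show ?thesis using i t nop by auto
qed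

lemma avoid:
  assumes r1: "epath H ta he x r1 (ta e)" and e: "e \<in> H" and e2: "e2 \<in> H" and tt: "ta e2 = ta e"
    and ne: "e2 \<noteq> e" and q: "epath H ta he (he e2) q T"
  shows "epath (H-{e}) ta he x (r1 @ e2 # q) T"
proof -
  have eE: "e \<in> E" "e2 \<in> E" using e e2 HE by auto
  have 1: "e \<notin> set r1"
  proof
    assume "e \<in> set r1"
    then have "(he e, ta e) \<in> {(ta e, he e) | e. e \<in> E}\<^sup>*" using epath_mid[OF r1 HE] by blast
    then show False using no_cycle[OF acyc eE(1)] by blast
  qed
  have 2: "e \<notin> set q"
  proof
    assume "e \<in> set q"
    then have "(he e2, ta e) \<in> {(ta e, he e) | e. e \<in> E}\<^sup>*" using epath_mid[OF q HE] by blast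
    then have "(he e2, ta e2) \<in> {(ta e, he e) | e. e \<in> E}\<^sup>*" using tt by simp
    then show False using no_cycle[OF acyc eE(2)] by blast
  qed
  have "epath H ta he x (r1 @ e2 # q) T" using r1 e2 tt q by (auto simp: epath_append)
  then show ?thesis using 1 2 ne by (intro epath_remove) auto
qed

lemma uniq: "t \<in> {t1,t2} \<Longrightarrow> epath H ta he u p t \<Longrightarrow> epath H ta he u q t \<Longrightarrow> p = q"
proof (induction p arbitrary: u q)
  case Nil
  show ?case
  proof (cases q)
    case (Cons e q')
    then have "e \<in> E" "ta e = t" using Nil HE by auto
    then show ?thesis using Nil.prems(1) out1 out2 by auto
  qed simp
next
  case (Cons e p')
  show ?case
  proof (cases q)
    case Nil
    then have "e \<in> E" "ta e = t" using Cons.prems HE by auto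
    then show ?thesis using Cons.prems(1) out1 out2 by auto
  next
    case (Cons e2 q')
    note C = Cons
    show ?thesis
    proof (cases "e = e2")
      case True
      have "p' = q'"
        by (rule Cons.IH[of "he e"]) (use Cons.prems C True in auto)
      then show ?thesis using C True by simp
    next
      case False
      have e: "e \<in> H" "ta e = u" "epath H ta he (he e) p' t" using Cons.prems by auto
      have f: "e2 \<in> H" "ta e2 = u" "epath H ta he (he e2) q' t" using Cons.prems C by auto
      from crit[OF e(1)] obtain i' t' r1 r2 where t': "t'\<in>{t1,t2}"
        and r1: "epath H ta he (s i') r1 (ta e)" and r2: "epath H ta he (he e) r2 t'"
        and n1: "\<forall>p. \<not> epath (H-{e}) ta he (s i') p t'" by blast
      from crit[OF f(1)] obtain i'' t'' r1' r2' where t'': "t''\<in>{t1,t2}"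
        and r1': "epath H ta he (s i'') r1' (ta e2)" and r2': "epath H ta he (he e2) r2' t''"
        and n2: "\<forall>p. \<not> epath (H-{e2}) ta he (s i'') p t''" by blast
      show ?thesis
      proof (cases "t' = t")
        case True
        have "epath (H-{e}) ta he (s i') (r1 @ e2 # q') t"
          by (rule avoid[OF r1 e(1) f(1) _ _ f(3)]) (use False e f in auto)
        then show ?thesis using n1 True by blast
      next
        case F1: False
        show ?thesis
        proof (cases "t'' = t")
          case True
          have "epath (H-{e2}) ta he (s i'') (r1' @ e # p') t"
            by (rule avoid[OF r1' f(1) e(1) _ _ e(3)]) (use \<open>e \<noteq> e2\<close> e f in auto)
          then show ?thesis using n2 True by blast
        next
          case False
          then have "t'' = t'" using F1 t' t'' Cons.prems by auto
          moreover have "epath (H-{e}) ta he (s i') (r1 @ e2 # r2') t''"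
            by (rule avoid[OF r1 e(1) f(1) _ _ r2']) (use \<open>e \<noteq> e2\<close> e f in auto)
          ultimately show ?thesis using n1 by blast
        qed
      qed
    qed
  qed
qed

lemma L:
  assumes r: "epath H ta he w r t" and t: "t \<in> {t1,t2}" and sk: "s k \<noteq> w"
  shows "(\<Sum>e'\<in>{e'\<in>E. he e' = w}. (if e' \<in> H \<and> (\<exists>p. epath H ta he (s k) p (ta e')) then c else 0))
     = (if (\<exists>p. epath H ta he (s k) p w) then c else (0::'a::comm_monoid_add))"
proof -
  let ?A = "{e'\<in>E. he e' = w}"
  let ?P = "\<lambda>e'. e' \<in> H \<and> (\<exists>p. epath H ta he (s k) p (ta e'))"
  have finA: "finite ?A" using finE by auto
  have un: "e1 = e2" if hy: "e1 \<in> ?A" "e2 \<in> ?A" "?P e1" "?P e2" for e1 e2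
  proof -
    obtain p1 p2 where p1: "epath H ta he (s k) p1 (ta e1)" and p2: "epath H ta he (s k) p2 (ta e2)"
      using hy by auto
    have "epath H ta he (s k) ((p1 @ [e1]) @ r) t" using p1 r hy by (auto simp: epath_append)
    moreover have "epath H ta he (s k) ((p2 @ [e2]) @ r) t" using p2 r hy by (auto simp: epath_append)
    ultimately have "(p1 @ [e1]) @ r = (p2 @ [e2]) @ r" using uniq t by blast
    then show ?thesis by simp
  qed
  show ?thesis
  proof (cases "\<exists>p. epath H ta he (s k) p w")
    case True
    then obtain p where p: "epath H ta he (s k) p w" by blast
    have "p \<noteq> []" using p sk by auto
    then obtain p0 e0 where "p = p0 @ [e0]" by (metis rev_exhaust)
    then obtain x where "epath H ta he (s k) p0 x" "epath H ta he x [e0] w" using p by (auto simp: epath_append)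
    then have e0: "e0 \<in> ?A" "?P e0" using HE by auto
    have "(\<Sum>e'\<in>?A. (if ?P e' then c else 0)) = (\<Sum>e'\<in>?A. (if e' = e0 then c else 0))"
      by (rule sum.cong) (use un e0 in auto)
    also have "\<dots> = c" using e0 finA by simp
    finally show ?thesis using True by simp
  next
    case False
    have "\<not> ?P e'" if "e' \<in> ?A" for e'
    proof
      assume "?P e'"
      then obtain p where "epath H ta he (s k) p (ta e')" "e' \<in> H" by auto
      then have "epath H ta he (s k) (p @ [e']) w" using that by (auto simp: epath_append)
      then show False using False by blast
    qed
    then have "\<forall>e'\<in>?A. (if ?P e' then c else 0) = 0" by auto
    then show ?thesis using False by (simp only: sum.neutral) simp
  qed
qed

end

lemma flow_path:
  assumes net: "network V E tail head" and sV: "s \<in> V" and tout: "out_edges E tail t = {}"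
    and mf: "max_flow V E tail head s t \<ge> 1"
  shows "s \<noteq> t \<and> (\<exists>p. epath E tail head s p t)"
proof -
  have finE: "finite E" and inV: "\<forall>e\<in>E. tail e \<in> V \<and> head e \<in> V" and finV: "finite V"
    using net by (auto simp: network_def)
  define S where "S = {flow_value E tail head s f | f. is_flow V E tail head s t f}"
  have "is_flow V E tail head s t (\<lambda>_. 0)" by (simp add: is_flow_def)
  then have ne: "S \<noteq> {}" unfolding S_def by blast
  have finO: "finite (out_edges E tail s)" and finI: "finite (in_edges E head s)"
    using finE by (auto simp: out_edges_def in_edges_def)
  have bdd: "bdd_above S"
  proof (rule bdd_aboveI)
    fix x assume "x \<in> S"
    then obtain f where f: "is_flow V E tail head s t f" and x: "x = flow_value E tail head s f"
      unfolding S_def by blast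
    have "(\<Sum>e\<in>out_edges E tail s. f e) \<le> (\<Sum>e\<in>out_edges E tail s. 1)"
      using f by (intro sum_mono) (auto simp: is_flow_def out_edges_def)
    moreover have "0 \<le> (\<Sum>e\<in>in_edges E head s. f e)"
      using f by (intro sum_nonneg) (auto simp: is_flow_def in_edges_def)
    ultimately show "x \<le> real (card (out_edges E tail s))" using x by (simp add: flow_value_def)
  qed
  have "max_flow V E tail head s t = Sup S" by (simp add: max_flow_def S_def)
  then have "0 < Sup S" using mf by linarith
  then obtain x where "x \<in> S" "0 < x" using less_cSup_iff[OF ne bdd] by blast
  then obtain f where f: "is_flow V E tail head s t f" and pos: "0 < flow_value E tail head s f"
    unfolding S_def by blast
  have fnn: "\<forall>e\<in>E. 0 \<le> f e" using f by (simp add: is_flow_def)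
  have cons: "\<forall>v\<in>V - {s, t}. (\<Sum>e\<in>in_edges E head v. f e) = (\<Sum>e\<in>out_edges E tail v. f e)"
    using f by (simp add: is_flow_def)
  have st: "s \<noteq> t"
  proof
    assume "s = t"
    then have "flow_value E tail head s f = - (\<Sum>e\<in>in_edges E head s. f e)"
      using tout by (simp add: flow_value_def)
    moreover have "0 \<le> (\<Sum>e\<in>in_edges E head s. f e)"
      using fnn by (intro sum_nonneg) (auto simp: in_edges_def)
    ultimately show False using pos by linarith
  qed
  define R where "R = {v\<in>V. \<exists>p. epath E tail head s p v}"
  have "t \<in> R"
  proof (rule ccontr)
    assume tR: "t \<notin> R"
    have finR: "finite R" using finV by (simp add: R_def)
    have sR: "s \<in> R" using sV unfolding R_def by (auto intro: exI[of _ "[]"])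
    let ?g = "\<lambda>v. (\<Sum>e\<in>out_edges E tail v. f e) - (\<Sum>e\<in>in_edges E head v. f e)"
    have "(\<Sum>v\<in>R. ?g v) = ?g s + (\<Sum>v\<in>R-{s}. ?g v)" by (rule sum.remove[OF finR sR])
    also have "(\<Sum>v\<in>R-{s}. ?g v) = 0"
    proof (rule sum.neutral, rule ballI)
      fix v assume "v \<in> R - {s}"
      then have "v \<in> V - {s,t}" using tR unfolding R_def by auto
      then show "?g v = 0" using cons by simp
    qed
    finally have 1: "(\<Sum>v\<in>R. ?g v) = flow_value E tail head s f" by (simp add: flow_value_def)
    have o: "(\<Sum>v\<in>R. \<Sum>e\<in>out_edges E tail v. f e) = (\<Sum>e\<in>{e\<in>E. tail e \<in> R}. f e)"
    proof -
      have "(\<Sum>v\<in>R. \<Sum>e\<in>out_edges E tail v. f e) = (\<Sum>v\<in>R. sum f {x. x \<in> {e\<in>E. tail e \<in> R} \<and> tail x = v})"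
        by (rule sum.cong[OF refl], rule sum.cong) (auto simp: out_edges_def)
      also have "\<dots> = (\<Sum>e\<in>{e\<in>E. tail e \<in> R}. f e)"
        by (rule sum.group) (use finE finR in auto)
      finally show ?thesis .
    qed
    have i: "(\<Sum>v\<in>R. \<Sum>e\<in>in_edges E head v. f e) = (\<Sum>e\<in>{e\<in>E. head e \<in> R}. f e)"
    proof -
      have "(\<Sum>v\<in>R. \<Sum>e\<in>in_edges E head v. f e) = (\<Sum>v\<in>R. sum f {x. x \<in> {e\<in>E. head e \<in> R} \<and> head x = v})"
        by (rule sum.cong[OF refl], rule sum.cong) (auto simp: in_edges_def)
      also have "\<dots> = (\<Sum>e\<in>{e\<in>E. head e \<in> R}. f e)"
        by (rule sum.group) (use finE finR in auto)
      finally show ?thesis .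
    qed
    have sub: "{e\<in>E. tail e \<in> R} \<subseteq> {e\<in>E. head e \<in> R}"
    proof
      fix e assume e: "e \<in> {e\<in>E. tail e \<in> R}"
      then obtain p where p: "epath E tail head s p (tail e)" unfolding R_def by auto
      have "epath E tail head s (p @ [e]) (head e)" using p e by (auto simp: epath_append)
      then show "e \<in> {e\<in>E. head e \<in> R}" using e inV unfolding R_def by blast
    qed
    have "(\<Sum>e\<in>{e\<in>E. tail e \<in> R}. f e) \<le> (\<Sum>e\<in>{e\<in>E. head e \<in> R}. f e)"
      by (rule sum_mono2) (use finE sub fnn in auto)
    then have "(\<Sum>v\<in>R. ?g v) \<le> 0" using o i by (simp add: sum_subtractf)
    then show False using 1 pos by linarith
  qed
  then show ?thesis using st R_def by auto
qed


theorem theorem2: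
  fixes V :: "'v set" and E :: "'e set" and tail head :: "'e \<Rightarrow> 'v"
    and n :: nat and s :: "nat \<Rightarrow> 'v" and t1 t2 :: 'v and m :: nat
  assumes net: "network V E tail head"
    and src_inj: "inj_on s {1..n}"
    and src: "\<forall>i\<in>{1..n}. s i \<in> V \<and> in_edges E head (s i) = {}"
    and src_all: "\<forall>v\<in>V. in_edges E head v = {} \<longrightarrow> v \<in> s ` {1..n}"
    and terms: "t1 \<in> V" "t2 \<in> V" "t1 \<noteq> t2"
       "out_edges E tail t1 = {}" "out_edges E tail t2 = {}"
    and term_all: "\<forall>v\<in>V. out_edges E tail v = {} \<longrightarrow> v = t1 \<or> v = t2"
    and conn: "\<forall>i\<in>{1..n}. \<forall>t\<in>{t1, t2}. max_flow V E tail head (s i) t \<ge> 1"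
    and field: "CARD('f::{field, finite}) = 2 ^ m"
  shows "\<exists>(a :: 'e \<Rightarrow> 'f) (\<beta> :: 'e \<Rightarrow> 'e \<Rightarrow> 'f) (Y :: (nat \<Rightarrow> 'f) \<Rightarrow> 'e \<Rightarrow> 'f).
           (\<forall>X. linear_code_symbols E tail head n s a \<beta> X (Y X)) \<and>
           (\<forall>t\<in>{t1, t2}. \<exists>dec. \<forall>X.
               dec (restrict (Y X) (in_edges E head t)) = (\<Sum>i=1..n. X i))"
proof -
  have finE: "finite E" and inV: "\<forall>e\<in>E. tail e \<in> V \<and> head e \<in> V" and finV: "finite V"
    and acyc: "acyclic {(tail e, head e) | e. e \<in> E}"
    using net by (auto simp: network_def)
  have tout1: "\<forall>e\<in>E. tail e \<noteq> t1" using terms(4) unfolding out_edges_def by blast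
  have tout2: "\<forall>e\<in>E. tail e \<noteq> t2" using terms(5) unfolding out_edges_def by blast
  define good where "good H \<longleftrightarrow> (\<forall>i\<in>{1..n}. \<forall>t\<in>{t1,t2}. \<exists>p. epath H tail head (s i) p t)" for H
  have fl: "s i \<noteq> t \<and> (\<exists>p. epath E tail head (s i) p t)" if i: "i\<in>{1..n}" and t: "t\<in>{t1,t2}" for i t
  proof -
    have sV: "s i \<in> V" using src i by auto
    have to: "out_edges E tail t = {}" using t terms(4,5) by auto
    have "max_flow V E tail head (s i) t \<ge> 1" using conn i t by auto
    then show ?thesis using flow_path[OF net sV to] by blast
  qed
  have gE: "good E" unfolding good_def using fl by blast
  obtain H where H: "H \<subseteq> E \<and> good H" and Hmin: "\<forall>H'. H' \<subseteq> E \<and> good H' \<longrightarrow> card H \<le> card H'"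
    using ex_has_least_nat[of "\<lambda>H. H \<subseteq> E \<and> good H" E card] gE by blast
  have minH: "\<forall>e\<in>H. \<not> good (H-{e})"
  proof (intro ballI notI)
    fix e assume e: "e\<in>H" "good (H-{e})"
    have "finite H" using H finE finite_subset by blast
    then have "card (H-{e}) < card H" using e by (meson card_Diff1_less)
    moreover have "H - {e} \<subseteq> E" using H by blast
    then have "card H \<le> card (H-{e})" using Hmin e(2) by blast
    ultimately show False by simp
  qed
  interpret mh E tail head n s t1 t2 H
    using acyc finE H tout1 tout2 minH by unfold_locales (auto simp: good_def)
  define reach where "reach k w \<longleftrightarrow> (\<exists>p. epath H tail head (s k) p w)" for k w
  define a :: "'e \<Rightarrow> 'f" where "a e = (if e\<in>H then 1 else 0)" for e
  define \<beta> :: "'e\<Rightarrow>'e\<Rightarrow>'f" where "\<beta> e' e = (if e'\<in>H \<and> e\<in>H then 1 else 0)" for e' e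
  define Y :: "(nat\<Rightarrow>'f) \<Rightarrow> 'e \<Rightarrow> 'f" where
    "Y X e = (if e\<in>H then (\<Sum>k\<in>{1..n}. if reach k (tail e) then X k else 0) else 0)" for X e
  have code: "linear_code_symbols E tail head n s a \<beta> X (Y X)" for X
    unfolding linear_code_symbols_def
  proof (intro ballI conjI impI)
    fix e i assume e: "e\<in>E" and i: "i\<in>{1..n}" and ti: "tail e = s i"
    show "Y X e = a e * X i"
    proof (cases "e\<in>H")
      case False then show ?thesis by (simp add: Y_def a_def)
    next
      case True
      have rk: "reach k (s i) \<longleftrightarrow> k = i" if k: "k\<in>{1..n}" for k
      proof
        assume "reach k (s i)"
        then obtain p where p: "epath H tail head (s k) p (s i)" by (auto simp: reach_def)
        have "p = []"
        proof (rule ccontr)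
          assume "p \<noteq> []"
          then obtain p0 e0 where "p = p0 @ [e0]" by (metis rev_exhaust)
          then obtain x where "epath H tail head x [e0] (s i)" using p by (auto simp: epath_append)
          then have "e0 \<in> in_edges E head (s i)" using HE by (auto simp: in_edges_def)
          then show False using src i by auto
        qed
        then have "s k = s i" using p by simp
        then show "k = i" using src_inj k i by (meson inj_onD)
      next
        assume "k = i" then show "reach k (s i)" by (auto simp: reach_def intro: exI[of _ "[]"])
      qed
      have "Y X e = (\<Sum>k\<in>{1..n}. if k = i then X k else 0)"
        unfolding Y_def using True ti rk by (auto intro: sum.cong)
      also have "\<dots> = X i" using i by simp
      finally show ?thesis using True by (simp add: a_def)
    qed
  next
    fix e assume e: "e\<in>E" and ns: "tail e \<notin> s ` {1..n}"
    show "Y X e = (\<Sum>e'\<in>in_edges E head (tail e). \<beta> e' e * Y X e')"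
    proof (cases "e\<in>H")
      case False then show ?thesis by (simp add: Y_def \<beta>_def)
    next
      case True
      from crit[OF True] obtain t r2 where t: "t\<in>{t1,t2}" and r2: "epath H tail head (head e) r2 t" by blast
      have w: "epath H tail head (tail e) (e#r2) t" using True r2 by simp
      have "(\<Sum>e'\<in>in_edges E head (tail e). \<beta> e' e * Y X e') =
            (\<Sum>e'\<in>in_edges E head (tail e). \<Sum>k\<in>{1..n}. if e'\<in>H \<and> reach k (tail e') then X k else 0)"
        using True by (intro sum.cong) (auto simp: \<beta>_def Y_def intro: sum.cong)
      also have "\<dots> = (\<Sum>k\<in>{1..n}. \<Sum>e'\<in>in_edges E head (tail e). if e'\<in>H \<and> reach k (tail e') then X k else 0)"
        by (rule sum.swap)
      also have "\<dots> = (\<Sum>k\<in>{1..n}. if reach k (tail e) then X k else 0)"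
      proof (rule sum.cong[OF refl])
        fix k assume k: "k \<in> {1..n}"
        have "s k \<noteq> tail e" using ns k by (metis image_eqI)
        from L[OF w t this, of "X k"]
        show "(\<Sum>e'\<in>in_edges E head (tail e). if e'\<in>H \<and> reach k (tail e') then X k else 0) =
              (if reach k (tail e) then X k else 0)"
          unfolding in_edges_def reach_def .
      qed
      finally show ?thesis using True by (simp add: Y_def)
    qed
  qed
  have dec: "\<exists>dec. \<forall>X. dec (restrict (Y X) (in_edges E head t)) = (\<Sum>i=1..n. X i)"
    if t: "t\<in>{t1,t2}" for t
  proof (intro exI allI)
    fix X
    let ?d = "\<lambda>g. \<Sum>e\<in>in_edges E head t. if e\<in>H then g e else (0::'f)"
    have "?d (restrict (Y X) (in_edges E head t)) =
          (\<Sum>e\<in>in_edges E head t. \<Sum>k\<in>{1..n}. if e\<in>H \<and> reach k (tail e) then X k else 0)"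
      by (intro sum.cong) (auto simp: Y_def intro: sum.cong)
    also have "\<dots> = (\<Sum>k\<in>{1..n}. \<Sum>e\<in>in_edges E head t. if e\<in>H \<and> reach k (tail e) then X k else 0)"
      by (rule sum.swap)
    also have "\<dots> = (\<Sum>k\<in>{1..n}. X k)"
    proof (rule sum.cong[OF refl])
      fix k assume k: "k\<in>{1..n}"
      have sk: "s k \<noteq> t" using fl k t by blast
      have rk: "reach k t" using goodH k t unfolding reach_def by blast
      have tt: "epath H tail head t [] t" by simp
      from L[OF tt t sk, of "X k"] rk
      show "(\<Sum>e\<in>in_edges E head t. if e\<in>H \<and> reach k (tail e) then X k else 0) = X k"
        unfolding in_edges_def reach_def by simp
    qed
    finally show "?d (restrict (Y X) (in_edges E head t)) = (\<Sum>i=1..n. X i)" .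
  qed
  show ?thesis using code dec by blast
qed


end
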